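(* Let $\mathbf{X}\subset\mathbb{R}^d$ be finite, $k\ge1$, $\ell>0$, and consider the $k$-means$\parallel$ seeding algorithm with parameter $\ell$. For every round $t\ge1$: - if $\ell<k$: $\mathbb{E}[\mathrm{cost}(\mathbf{X},C_{t+1})]\le e^{-\ell/k}\,\mathbb{E}[\mathrm{cost}(\mathbf{X},C_t)]+5\,\mathrm{OPT}_k(\mathbf{X})$; - if $\ell\ge k$: $\mathbb{E}[\mathrm{cost}(\mathbf{X},C_{t+1})]\le \frac{k}{e\ell}\,\mathbb{E}[\mathrm{cost}(\mathbf{X},C_t)]+5\,\mathrm{OPT}_k(\mathbf{X})$.
   Context: For a finite $C\subset\mathbb{R}^d$, $\mathrm{cost}(x,C)=\min_{c\in C}\|x-c\|^2$, $\mathrm{cost}(\mathbf{Y},C)=\sum_{x\in\mathbf{Y}}\mathrm{cost}(x,C)$, $\mathrm{OPT}_k(\mathbf{X})=\min_{|C|=k}\mathrm{cost}(\mathbf{X},C)$. The $k$-means$\parallel$ seeding algorithm with parameter $\ell$: choose $c$ uniformly at random from $\mathbf{X}$, $C_1=\{c\}$; in round $t=1,2,\dots$, let $\lambda_t(x)=\ell\,\mathrm{cost}(x,C_t)/\mathrm{cost}(\mathbf{X},C_t)$, include each $x\in\mathbf{X}$ in a set $C'$ independently with probability $\min\{1,\lambda_t(x)\}$, and set $C_{t+1}=C_t\cup C'$. *)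

theory Defs
  imports "HOL-Analysis.Analysis" "HOL-Probability.Probability"
begin

definition pcost :: "'a::euclidean_space \<Rightarrow> 'a set \<Rightarrow> real" where
  "pcost x C = Min ((\<lambda>c. (norm (x - c))\<^sup>2) ` C)"

definition setcost :: "'a::euclidean_space set \<Rightarrow> 'a set \<Rightarrow> real" where
  "setcost Y C = (\<Sum>x\<in>Y. pcost x C)"

definition OPT :: "nat \<Rightarrow> 'a::euclidean_space set \<Rightarrow> real" where
  "OPT k X = Inf {setcost X C | C. finite C \<and> card C = k}"

definition samp_rate :: "'a::euclidean_space set \<Rightarrow> real \<Rightarrow> 'a set \<Rightarrow> 'a \<Rightarrow> real" where
  "samp_rate X l C x = l * pcost x C / setcost X C"

definition kmpar_step :: "'a::euclidean_space set \<Rightarrow> real \<Rightarrow> 'a set \<Rightarrow> 'a set pmf" where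
  "kmpar_step X l C =
     map_pmf (\<lambda>b. C \<union> {x\<in>X. b x})
       (Pi_pmf X False (\<lambda>x. bernoulli_pmf (min 1 (samp_rate X l C x))))"

text \<open>kmpar_seq X l n is the distribution of C_(n+1): C_1 = {c}, c uniform from X.\<close>
primrec kmpar_seq :: "'a::euclidean_space set \<Rightarrow> real \<Rightarrow> nat \<Rightarrow> 'a set pmf" where
  "kmpar_seq X l 0 = map_pmf (\<lambda>c. {c}) (pmf_of_set X)"
| "kmpar_seq X l (Suc n) = bind_pmf (kmpar_seq X l n) (kmpar_step X l)"

definition kmpar_C :: "'a::euclidean_space set \<Rightarrow> real \<Rightarrow> nat \<Rightarrow> 'a set pmf" where
  "kmpar_C X l t = kmpar_seq X l (t - 1)"

definition exp_cost :: "'a::euclidean_space set \<Rightarrow> real \<Rightarrow> nat \<Rightarrow> real" where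
  "exp_cost X l t = measure_pmf.expectation (kmpar_C X l t) (\<lambda>C. setcost X C)"

end

theory Submission
  imports Defs
begin


lemma L4_case1:
  fixes D Del r q :: real
  assumes "q > 0" "r \<ge> 0" "D \<ge> 0" "Del \<ge> 0" "D \<le> Del + r" "Del \<le> q"
  shows "D^2 * min (q^2) (r^2) \<le> 4*q^2*r^2"
proof (cases "r \<le> q")
  case True
  have "D \<le> 2*q" using assms True by linarith
  hence "D^2 \<le> (2*q)^2" using assms by (intro power_mono) auto
  moreover have "min (q^2) (r^2) = r^2" using True assms by (simp add: power_mono)
  ultimately show ?thesis by (simp add: power_mult_distrib mult_right_mono)
next
  case False
  have "D \<le> 2*r" using assms False by linarith
  hence "D^2 \<le> (2*r)^2" using assms by (intro power_mono) auto
  moreover have "min (q^2) (r^2) = q^2" using False assms by (simp add: power_mono)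
  ultimately have "D^2 * q^2 \<le> (4*r^2) * q^2" by (intro mult_right_mono) (auto simp: power_mult_distrib)
  thus ?thesis using \<open>min (q^2) (r^2) = q^2\<close> by (simp add: mult.commute mult.left_commute)
qed

lemma L4_case2a:
  fixes D Del r q :: real
  assumes "q > 0" "r \<ge> q" "D \<ge> 0" "Del > q" "D \<le> Del + r"
  shows "Del^2 * (D^2 * q^2) \<le> Del^2 * (4*q^2*r^2) + q^2*(Del^2 - q^2)*(D^2 - q^2)"
proof -
  have D2: "D^2 \<le> (Del + r)^2" using assms by (intro power_mono) auto
  have p1: "(r^2 - q^2)*(Del^2 - q^2) \<ge> 0" using assms
    by (intro mult_nonneg_nonneg) (auto simp: power_mono)
  have rd: "r * Del \<ge> q * q" using assms by (intro mult_mono) auto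
  have p2: "2*r*Del*(r*Del - q^2) \<ge> 0" using rd assms by (simp add: power2_eq_square)
  have p3: "q^2*(r^2 - q^2) \<ge> 0" using assms by (simp add: power_mono)
  have key: "q^2 * (D^2 + Del^2) \<le> 4*r^2*Del^2 + q^4"
  proof -
    have "q^2 * (D^2 + Del^2) \<le> q^2 * ((Del+r)^2 + Del^2)" using D2 by (intro mult_left_mono) auto
    also have "\<dots> \<le> 4*r^2*Del^2 + q^4"
    proof -
      have "4*r^2*Del^2 + q^4 - q^2 * ((Del+r)^2 + Del^2) = 2*(r^2 - q^2)*(Del^2 - q^2) + 2*r*Del*(r*Del - q^2) + q^2*(r^2 - q^2)"
        by (simp add: power2_eq_square power4_eq_xxxx algebra_simps)
      thus ?thesis using p1 p2 p3 by linarith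
    qed
    finally show ?thesis .
  qed
  have "Del^2 * (4*q^2*r^2) + q^2*(Del^2 - q^2)*(D^2 - q^2) - Del^2 * (D^2 * q^2) = q^2 * (4*r^2*Del^2 + q^4 - q^2 * (D^2 + Del^2))"
    by (simp add: power2_eq_square power4_eq_xxxx algebra_simps)
  moreover have "q^2 * (4*r^2*Del^2 + q^4 - q^2 * (D^2 + Del^2)) \<ge> 0" using key by simp
  ultimately show ?thesis by linarith
qed



lemma L4_case2b:
  fixes D Del r q :: real
  assumes "q > 0" "r \<ge> 0" "r < q" "D \<ge> 0" "Del > q" "D \<le> Del + r" "Del \<le> D + r"
  shows "Del^2 * (D^2 * r^2) \<le> Del^2 * (4*q^2*r^2) + q^2*(Del^2 - q^2)*(D^2 - q^2)"
proof -
  have G: "Del^2 * (4*q^2*r^2) + q^2*(Del^2 - q^2)*(D^2 - q^2) - Del^2 * (D^2 * r^2)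
      = q^2*(Del^2 - q^2)*(D^2 - q^2) - r^2*Del^2*(D^2 - 4*q^2)"
    by (simp add: algebra_simps)
  have "q^2*(Del^2 - q^2)*(D^2 - q^2) - r^2*Del^2*(D^2 - 4*q^2) \<ge> 0"
  proof (cases "D \<ge> 2*q")
    case True
    have r2: "r^2 \<le> q^2" using assms by (simp add: power_mono)
    have "D^2 - 4*q^2 \<ge> 0" using True assms power_mono[of "2*q" D 2] by (simp add: power_mult_distrib)
    hence h1: "r^2*Del^2*(D^2 - 4*q^2) \<le> q^2*Del^2*(D^2 - 4*q^2)"
      using r2 by (intro mult_right_mono) auto
    have "D^2 \<le> (Del + r)^2" using assms by (intro power_mono) auto
    also have "\<dots> = Del^2 + 2*Del*r + r^2" by (simp add: power2_eq_square algebra_simps)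
    also have "\<dots> \<le> Del^2 + 2*Del*Del + q^2" using r2 assms by (intro add_mono mult_left_mono) auto
    finally have "D^2 \<le> 3*Del^2 + q^2" by (simp add: power2_eq_square)
    hence "q^2*(q^2*(3*Del^2 + q^2 - D^2)) \<ge> 0" by simp
    moreover have "q^2*(Del^2 - q^2)*(D^2 - q^2) - q^2*Del^2*(D^2 - 4*q^2) = q^2*(q^2*(3*Del^2 + q^2 - D^2))"
      by (simp add: algebra_simps power2_eq_square)
    ultimately show ?thesis using h1 by linarith
  next
    case False
    show ?thesis
    proof (cases "D \<ge> q")
      case True
      have "q^2*(Del^2 - q^2)*(D^2 - q^2) \<ge> 0" using True assms
        by (intro mult_nonneg_nonneg) (auto simp: power_mono)
      moreover have "r^2*Del^2*(D^2 - 4*q^2) \<le> 0"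
      proof -
        have "D^2 \<le> (2*q)^2" using False assms by (intro power_mono) auto
        thus ?thesis by (intro mult_nonneg_nonpos) (auto simp: power_mult_distrib)
      qed
      ultimately show ?thesis by linarith
    next
      case Dq: False
      have rD: "r \<ge> Del - D" using assms by linarith
      have h0: "Del - D > 0" using Dq assms by linarith
      have "r^2 \<ge> (Del - D)^2" using rD h0 by (intro power_mono) auto
      moreover have "(Del - D)^2 \<ge> 4*(Del - q)*(q - D)"
      proof -
        have "(Del - D)^2 - 4*(Del - q)*(q - D) = ((Del - q) - (q - D))^2" by (simp add: power2_eq_square algebra_simps)
        thus ?thesis by (smt (verit) zero_le_power2)
      qed
      ultimately have r2: "r^2 \<ge> 4*(Del - q)*(q - D)" by linarith
      have f1: "4*q^2 - D^2 \<ge> 3*q^2" using Dq assms by (simp add: power_mono)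
      have "r^2*Del^2*(4*q^2 - D^2) \<ge> (4*(Del - q)*(q - D))*Del^2*(3*q^2)"
        using r2 f1 assms Dq by (intro mult_mono) auto
      moreover have "q^2*(Del^2 - q^2)*(q^2 - D^2) \<le> (4*(Del - q)*(q - D))*Del^2*(3*q^2)"
      proof -
        have e: "q^2*(Del^2 - q^2)*(q^2 - D^2) = ((Del - q)*(q - D)*q^2) * ((Del + q)*(q + D))"
          by (simp add: power2_eq_square algebra_simps)
        have "(Del + q)*(q + D) \<le> (2*Del)*(2*Del)" using assms Dq by (intro mult_mono) auto
        hence "((Del - q)*(q - D)*q^2) * ((Del + q)*(q + D)) \<le> ((Del - q)*(q - D)*q^2) * ((2*Del)*(2*Del))"
          using assms Dq by (intro mult_left_mono) auto
        also have "\<dots> \<le> (4*(Del - q)*(q - D))*Del^2*(3*q^2)"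
        proof -
          have "((Del - q)*(q - D)*q^2) * ((2*Del)*(2*Del)) = 4*((Del - q)*(q - D)*q^2*Del^2)" by (simp add: power2_eq_square algebra_simps)
          moreover have "(4*(Del - q)*(q - D))*Del^2*(3*q^2) = 12*((Del - q)*(q - D)*q^2*Del^2)" by (simp add: algebra_simps)
          moreover have "(Del - q)*(q - D)*q^2*Del^2 \<ge> 0" using assms Dq by simp
          ultimately show ?thesis by linarith
        qed
        finally show ?thesis unfolding e .
      qed
      ultimately show ?thesis by (smt (verit) mult_minus_right right_diff_distrib)
    qed
  qed
  thus ?thesis using G by linarith
qed



definition lamq :: "real \<Rightarrow> real \<Rightarrow> real" where
  "lamq Del q = (if Del \<le> q then 0 else q^2*(Del^2 - q^2)/Del^2)"

lemma L4:
  fixes D Del r q :: real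
  assumes "q > 0" "r \<ge> 0" "D \<ge> 0" "Del \<ge> 0" "D \<le> Del + r" "Del \<le> D + r"
  shows "D^2 * min (q^2) (r^2) \<le> 4*q^2*r^2 + lamq Del q * (D^2 - q^2)"
proof (cases "Del \<le> q")
  case True
  thus ?thesis using L4_case1[OF assms(1-5) True] by (simp add: lamq_def)
next
  case False
  hence Dp: "Del^2 > 0" using assms by simp
  have main: "Del^2 * (D^2 * min (q^2) (r^2)) \<le> Del^2 * (4*q^2*r^2) + q^2*(Del^2 - q^2)*(D^2 - q^2)"
  proof (cases "r \<ge> q")
    case True
    hence "min (q^2) (r^2) = q^2" using assms by (simp add: power_mono)
    thus ?thesis using L4_case2a[of q r D Del] True False assms by simp
  next
    case f2: False
    hence "min (q^2) (r^2) = r^2" using assms by (simp add: power_mono)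
    thus ?thesis using L4_case2b[of q r D Del] f2 False assms by simp
  qed
  have "lamq Del q * (D^2 - q^2) = (q^2*(Del^2 - q^2)*(D^2 - q^2)) / Del^2"
    using False by (simp add: lamq_def)
  moreover have "D^2 * min (q^2) (r^2) \<le> (Del^2 * (4*q^2*r^2) + q^2*(Del^2 - q^2)*(D^2 - q^2)) / Del^2"
    using main Dp by (simp add: le_divide_eq mult.commute)
  ultimately show ?thesis using Dp by (simp add: add_divide_distrib)
qed

lemma pcost_nonneg: "pcost x C \<ge> 0" if "finite C" "C \<noteq> {}"
  using that unfolding pcost_def by (subst Min_ge_iff) auto

lemma pcost_attained:
  assumes "finite C" "C \<noteq> {}"
  obtains c where "c \<in> C" "pcost x C = (norm (x - c))^2"
proof -
  have "Min ((\<lambda>c. (norm (x - c))\<^sup>2) ` C) \<in> (\<lambda>c. (norm (x - c))\<^sup>2) ` C"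
    by (rule Min_in) (use assms in auto)
  then obtain c where "c \<in> C" "Min ((\<lambda>c. (norm (x - c))\<^sup>2) ` C) = (norm (x - c))\<^sup>2" by blast
  thus ?thesis using that unfolding pcost_def by blast
qed

lemma pcost_le: "finite C \<Longrightarrow> c \<in> C \<Longrightarrow> pcost x C \<le> (norm (x - c))^2"
  unfolding pcost_def by (rule Min_le) auto

lemma pcost_mono: "finite C' \<Longrightarrow> C \<subseteq> C' \<Longrightarrow> C \<noteq> {} \<Longrightarrow> pcost x C' \<le> pcost x C"
  unfolding pcost_def by (rule Min_antimono) auto

lemma dist_lip:
  assumes "finite C" "C \<noteq> {}"
  shows "sqrt (pcost x C) \<le> sqrt (pcost y C) + norm (x - y)"
proof -
  obtain c where c: "c \<in> C" "pcost y C = (norm (y - c))^2" using pcost_attained[OF assms] by blast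
  have "sqrt (pcost x C) \<le> sqrt ((norm (x - c))^2)" by (intro real_sqrt_le_mono pcost_le[OF assms(1) c(1)])
  also have "\<dots> = norm (x - c)" by simp
  also have "\<dots> \<le> norm (x - y) + norm (y - c)" using norm_triangle_ineq[of "x - y" "y - c"] by simp
  also have "norm (y - c) = sqrt (pcost y C)" using c by simp
  finally show ?thesis by simp
qed

lemma norm_add_sq: "(norm (u + v))^2 = (norm u)^2 + (norm v)^2 + 2 * inner u v" for u v :: "'a::real_inner"
  by (simp add: power2_norm_eq_inner inner_add_left inner_add_right inner_commute)

definition cen :: "'a::euclidean_space set \<Rightarrow> 'a" where
  "cen P = (1 / real (card P)) *\<^sub>R (\<Sum>y\<in>P. y)"

lemma centroid_identity:
  fixes P :: "'a::euclidean_space set"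
  assumes "finite P"
  shows "(\<Sum>y\<in>P. (norm (x - y))^2) = (\<Sum>y\<in>P. (norm (y - cen P))^2) + real (card P) * (norm (x - cen P))^2"
proof (cases "P = {}")
  case True thus ?thesis by simp
next
  case False
  let ?a = "cen P"
  have zero: "(\<Sum>y\<in>P. (?a - y)) = 0"
  proof -
    have "card P > 0" using False assms by (simp add: card_gt_0_iff)
    hence "real (card P) *\<^sub>R ?a = (\<Sum>y\<in>P. y)" unfolding cen_def by simp
    thus ?thesis by (simp add: sum_subtractf sum_constant_scaleR)
  qed
  have eq: "\<And>y. (norm (x - y))^2 = (norm (x - ?a))^2 + (norm (y - ?a))^2 + 2 * inner (x - ?a) (?a - y)"
  proof -
    fix y
    have "x - y = (x - ?a) + (?a - y)" by simp
    hence "(norm (x - y))^2 = (norm ((x - ?a) + (?a - y)))^2" by simp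
    also have "\<dots> = (norm (x - ?a))^2 + (norm (?a - y))^2 + 2 * inner (x - ?a) (?a - y)"
      by (rule norm_add_sq)
    also have "norm (?a - y) = norm (y - ?a)" by (rule norm_minus_commute)
    finally show "(norm (x - y))^2 = (norm (x - ?a))^2 + (norm (y - ?a))^2 + 2 * inner (x - ?a) (?a - y)" .
  qed
  have "(\<Sum>y\<in>P. (norm (x - y))^2) = (\<Sum>y\<in>P. (norm (x - ?a))^2 + (norm (y - ?a))^2 + 2 * inner (x - ?a) (?a - y))"
    by (rule sum.cong[OF refl eq])
  also have "\<dots> = real (card P) * (norm (x - ?a))^2 + (\<Sum>y\<in>P. (norm (y - ?a))^2) + 2 * inner (x - ?a) (\<Sum>y\<in>P. (?a - y))"
    by (simp add: sum.distrib sum_distrib_left inner_sum_right)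
  also have "\<dots> = real (card P) * (norm (x - ?a))^2 + (\<Sum>y\<in>P. (norm (y - ?a))^2)" using zero by simp
  finally show ?thesis by simp
qed

lemma centroid_min:
  fixes P :: "'a::euclidean_space set"
  assumes "finite P"
  shows "(\<Sum>y\<in>P. (norm (y - cen P))^2) \<le> (\<Sum>y\<in>P. (norm (y - z))^2)"
proof -
  have "(\<Sum>y\<in>P. (norm (y - z))^2) = (\<Sum>y\<in>P. (norm (z - y))^2)" by (simp add: norm_minus_commute)
  also have "\<dots> = (\<Sum>y\<in>P. (norm (y - cen P))^2) + real (card P) * (norm (z - cen P))^2"
    by (rule centroid_identity[OF assms])
  finally show ?thesis by simp
qed



lemma L5:
  fixes P C :: "'a::euclidean_space set"
  assumes P: "finite P" "P \<noteq> {}" and C: "finite C" "C \<noteq> {}"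
  shows "(\<Sum>x\<in>P. pcost x C * (\<Sum>y\<in>P. min (pcost y C) ((norm (x - y))^2)))
         \<le> 5 * (\<Sum>y\<in>P. (norm (y - cen P))^2) * (\<Sum>x\<in>P. pcost x C)"
proof -
  define s where "s = (\<Sum>x\<in>P. pcost x C)"
  define A where "A = (\<Sum>y\<in>P. (norm (y - cen P))^2)"
  define n where "n = real (card P)"
  define a where "a = cen P"
  have pc0: "\<And>x. pcost x C \<ge> 0" using pcost_nonneg[OF C] .
  have n0: "n > 0" using P by (simp add: n_def card_gt_0_iff)
  have A0: "A \<ge> 0" unfolding A_def by (intro sum_nonneg) auto
  have s0: "s \<ge> 0" unfolding s_def using pc0 by (intro sum_nonneg) auto
  show ?thesis
  proof (cases "s = 0")
    case True
    hence "\<forall>x\<in>P. pcost x C = 0" using P pc0 unfolding s_def by (subst (asm) sum_nonneg_eq_0_iff) auto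
    thus ?thesis by simp
  next
    case False
    hence spos: "s > 0" using s0 by simp
    define q where "q = sqrt (s / n)"
    have q0: "q > 0" using spos n0 by (simp add: q_def)
    have q2: "q^2 = s / n" using spos n0 by (simp add: q_def)
    define Del where "Del = sqrt (pcost a C)"
    have per: "pcost x C * (\<Sum>y\<in>P. min (pcost y C) ((norm (x - y))^2))
        \<le> A * pcost x C + n * (4*q^2*(norm (x - a))^2 + lamq Del q * (pcost x C - q^2))" if x: "x \<in> P" for x
    proof -
      let ?f = "\<Sum>y\<in>P. min (pcost y C) ((norm (x - y))^2)"
      let ?r = "norm (x - a)"
      have f1: "?f \<le> s" unfolding s_def by (intro sum_mono) auto
      have f2: "?f \<le> A + n * ?r^2"
      proof -
        have "?f \<le> (\<Sum>y\<in>P. (norm (x - y))^2)" by (intro sum_mono) auto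
        also have "\<dots> = A + n * ?r^2" unfolding A_def n_def a_def by (rule centroid_identity[OF P(1)])
        finally show ?thesis .
      qed
      have f3: "?f \<le> A + n * min (q^2) (?r^2)"
      proof (cases "q^2 \<le> ?r^2")
        case True
        hence "min (q^2) (?r^2) = q^2" by simp
        moreover have "n * q^2 = s" using q2 n0 by simp
        ultimately show ?thesis using f1 A0 by simp
      next
        case False
        thus ?thesis using f2 by simp
      qed
      have Dsq: "(sqrt (pcost x C))^2 = pcost x C" using pc0 by simp
      have l4: "(sqrt (pcost x C))^2 * min (q^2) (?r^2) \<le> 4*q^2*?r^2 + lamq Del q * ((sqrt (pcost x C))^2 - q^2)"
      proof (rule L4[OF q0])
        show "sqrt (pcost x C) \<le> Del + ?r" unfolding Del_def by (rule dist_lip[OF C])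
        have "sqrt (pcost a C) \<le> sqrt (pcost x C) + norm (a - x)" by (rule dist_lip[OF C])
        thus "Del \<le> sqrt (pcost x C) + ?r" unfolding Del_def by (simp add: norm_minus_commute)
      qed (auto simp: Del_def pc0)
      have "pcost x C * ?f \<le> pcost x C * (A + n * min (q^2) (?r^2))"
        using f3 pc0 by (intro mult_left_mono) auto
      also have "\<dots> = A * pcost x C + n * (pcost x C * min (q^2) (?r^2))" by (simp add: algebra_simps)
      also have "\<dots> \<le> A * pcost x C + n * (4*q^2*?r^2 + lamq Del q * (pcost x C - q^2))"
        using l4 n0 unfolding Dsq by (intro add_left_mono mult_left_mono) auto
      finally show ?thesis .
    qed
    have "(\<Sum>x\<in>P. pcost x C * (\<Sum>y\<in>P. min (pcost y C) ((norm (x - y))^2)))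
        \<le> (\<Sum>x\<in>P. A * pcost x C + n * (4*q^2*(norm (x - a))^2 + lamq Del q * (pcost x C - q^2)))"
      by (intro sum_mono per)
    also have "\<dots> = A * (\<Sum>x\<in>P. pcost x C) + n * (4*q^2*(\<Sum>x\<in>P. (norm (x - a))^2) + lamq Del q * ((\<Sum>x\<in>P. pcost x C) - real (card P) * q^2))"
    proof -
      have "(\<Sum>x\<in>P. A * pcost x C + n * (4*q^2*(norm (x - a))^2 + lamq Del q * (pcost x C - q^2)))
         = A * (\<Sum>x\<in>P. pcost x C) + n * (\<Sum>x\<in>P. 4*q^2*(norm (x - a))^2 + lamq Del q * (pcost x C - q^2))"
        by (simp add: sum.distrib sum_distrib_left distrib_left)
      moreover have "(\<Sum>x\<in>P. 4*q^2*(norm (x - a))^2 + lamq Del q * (pcost x C - q^2))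
         = 4*q^2*(\<Sum>x\<in>P. (norm (x - a))^2) + lamq Del q * ((\<Sum>x\<in>P. pcost x C) - real (card P) * q^2)"
        by (simp add: sum.distrib sum_distrib_left sum_subtractf right_diff_distrib)
      ultimately show ?thesis by simp
    qed
    also have "\<dots> = A * s + n * (4*q^2*A + lamq Del q * (s - n * q^2))"
      by (simp add: s_def A_def a_def n_def)
    also have "\<dots> = 5 * A * s"
    proof -
      have "n * q^2 = s" using q2 n0 by simp
      thus ?thesis by (simp add: algebra_simps)
    qed
    finally show ?thesis unfolding A_def s_def .
  qed
qed



lemma yexp_le: "y \<ge> 0 \<Longrightarrow> y * exp (-y) \<le> exp (-1::real)"
proof -
  assume y: "y \<ge> 0"
  have "y \<le> exp (y - 1)" using exp_ge_add_one_self[of "y - 1"] by simp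
  hence "y * exp (-y) \<le> exp (y - 1) * exp (-y)" by (intro mult_right_mono) auto
  also have "\<dots> = exp (-1)" by (simp flip: exp_add)
  finally show ?thesis .
qed

lemma tangent_le:
  fixes y y0 :: real
  assumes "y \<ge> 0" "y0 \<ge> 0" "y0 < 1"
  shows "y * exp (-y) \<le> exp (-y0) * (y0 + (1 - y0) * (y - y0))"
proof -
  define t where "t = y - y0"
  have t1: "1 + t > 0" using assms by (simp add: t_def)
  have "exp (-t) * (1 + t) \<le> exp (-t) * exp t" using exp_ge_add_one_self[of t] by (intro mult_left_mono) auto
  hence et: "exp (-t) * (1 + t) \<le> 1" by (simp flip: exp_add)
  have "y * exp (-t) * (1 + t) \<le> y" using et assms(1) by (simp add: mult.assoc mult_left_le)
  also have "y \<le> (1 + t) * (y0 + (1 - y0) * t)"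
  proof -
    have "(1 + t) * (y0 + (1 - y0) * t) - y = t^2 * (1 - y0)" by (simp add: t_def power2_eq_square algebra_simps)
    moreover have "t^2 * (1 - y0) \<ge> 0" using assms by simp
    ultimately show ?thesis by linarith
  qed
  finally have "y * exp (-t) * (1 + t) \<le> (y0 + (1 - y0) * t) * (1 + t)" by (simp add: mult.commute)
  hence h: "y * exp (-t) \<le> y0 + (1 - y0) * t" using t1 by (simp add: mult_le_cancel_right)
  have "y * exp (-y) = exp (-y0) * (y * exp (-t))" by (simp add: t_def flip: exp_add)
  also have "\<dots> \<le> exp (-y0) * (y0 + (1 - y0) * t)" using h by (intro mult_left_mono) auto
  finally show ?thesis by (simp add: t_def)
qed

lemma factor_bound:
  fixes I :: "'b set" and c :: "'b \<Rightarrow> real" and k :: nat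
  assumes fin: "finite I" and ck: "card I = k" and k1: "k \<ge> 1" and c0: "\<And>i. i \<in> I \<Longrightarrow> c i \<ge> 0"
    and cs: "(\<Sum>i\<in>I. c i) = phi" and phi: "phi > 0" and l: "l > 0"
  shows "(\<Sum>i\<in>I. c i * exp (-(l * c i / phi))) \<le>
          (if l < real k then exp (- l / real k) * phi else real k / (exp 1 * l) * phi)"
proof -
  have eqi: "c i * exp (-(l * c i / phi)) = (phi / l) * ((l * c i / phi) * exp (-(l * c i / phi)))" for i
    using phi l by (simp add: field_simps)
  show ?thesis
  proof (cases "l < real k")
    case False
    have "(\<Sum>i\<in>I. c i * exp (-(l * c i / phi))) \<le> (\<Sum>i\<in>I. (phi / l) * exp (-1))"
    proof (intro sum_mono)
      fix i assume i: "i \<in> I"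
      have "(l * c i / phi) * exp (-(l * c i / phi)) \<le> exp (-1)"
        using c0[OF i] phi l by (intro yexp_le) simp
      thus "c i * exp (-(l * c i / phi)) \<le> (phi / l) * exp (-1)"
        unfolding eqi using phi l by (intro mult_left_mono) auto
    qed
    also have "\<dots> = real k / (exp 1 * l) * phi" using ck by (simp add: exp_minus field_simps)
    finally show ?thesis using False by simp
  next
    case True
    define y0 where "y0 = l / real k"
    have y00: "y0 \<ge> 0" "y0 < 1" using True l k1 by (auto simp: y0_def)
    have "(\<Sum>i\<in>I. c i * exp (-(l * c i / phi)))
          \<le> (\<Sum>i\<in>I. (phi / l) * (exp (-y0) * (y0 + (1 - y0) * (l * c i / phi - y0))))"
    proof (intro sum_mono)
      fix i assume i: "i \<in> I"
      have "(l * c i / phi) * exp (-(l * c i / phi)) \<le> exp (-y0) * (y0 + (1 - y0) * (l * c i / phi - y0))"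
        using c0[OF i] phi l y00 by (intro tangent_le) auto
      thus "c i * exp (-(l * c i / phi)) \<le> (phi / l) * (exp (-y0) * (y0 + (1 - y0) * (l * c i / phi - y0)))"
        unfolding eqi using phi l by (intro mult_left_mono) auto
    qed
    also have "\<dots> = (\<Sum>i\<in>I. (phi / l) * exp (-y0) * y0^2 + ((phi / l) * exp (-y0) * (1 - y0) * l / phi) * c i)"
    proof (intro sum.cong refl)
      fix i
      have "y0 + (1 - y0) * (l * c i / phi - y0) = y0^2 + ((1 - y0) * l / phi) * c i"
        by (simp add: power2_eq_square algebra_simps)
      thus "(phi / l) * (exp (-y0) * (y0 + (1 - y0) * (l * c i / phi - y0))) = (phi / l) * exp (-y0) * y0^2 + ((phi / l) * exp (-y0) * (1 - y0) * l / phi) * c i"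
        using phi l by (simp add: field_simps)
    qed
    also have "\<dots> = real k * ((phi / l) * exp (-y0) * y0^2) + ((phi / l) * exp (-y0) * (1 - y0) * l / phi) * phi"
      by (simp add: sum.distrib cs ck flip: sum_distrib_left)
    also have "\<dots> = exp (- l / real k) * phi"
    proof -
      have ky: "real k * y0 = l" using k1 by (simp add: y0_def)
      have "real k * ((phi / l) * exp (-y0) * y0^2) = (phi / l) * exp (-y0) * y0 * (real k * y0)" by (simp add: power2_eq_square)
      also have "\<dots> = phi * exp (-y0) * y0" using ky l by simp
      finally have e1: "real k * ((phi / l) * exp (-y0) * y0^2) = phi * exp (-y0) * y0" .
      have e2: "((phi / l) * exp (-y0) * (1 - y0) * l / phi) * phi = phi * exp (-y0) * (1 - y0)" using l phi by simp
      have "exp (-y0) = exp (- l / real k)" by (simp add: y0_def)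
      thus ?thesis unfolding e1 e2 by (simp add: algebra_simps)
    qed
    finally show ?thesis using True by simp
  qed
qed

lemma concave_aux:
  fixes a b :: real
  assumes "0 \<le> a" "a \<le> b" "b > 0"
  shows "a * (1 - exp (-b)) \<le> b * (1 - exp (-a))"
proof -
  define t where "t = a / b"
  have t: "0 \<le> t" "t \<le> 1" using assms by (auto simp: t_def)
  have "exp ((1 - t) *\<^sub>R 0 + t *\<^sub>R (-b)) \<le> (1 - t) * exp 0 + t * exp (-b)"
    using t by (intro convex_onD[OF exp_convex]) auto
  moreover have "(1 - t) *\<^sub>R 0 + t *\<^sub>R (-b) = -a" using assms by (simp add: t_def)
  ultimately have "exp (-a) \<le> 1 - t + t * exp (-b)" by simp
  hence "b * exp (-a) \<le> b * (1 - t + t * exp (-b))" using assms by (intro mult_left_mono) auto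
  also have "\<dots> = b - a + a * exp (-b)" using assms by (simp add: t_def field_simps)
  finally show ?thesis by (simp add: algebra_simps)
qed



lemma arith_step:
  fixes p0 mu0 g0 c M' S' V' :: real
  assumes p0: "0 \<le> p0" "p0 \<le> 1" and mu0: "0 \<le> mu0" and q0: "1 - exp (-mu0) \<le> p0" and gc: "g0 \<le> c"
    and M': "M' \<ge> 0" and S': "S' \<ge> M' * g0" and S0: "M' = 0 \<Longrightarrow> S' = 0"
    and V': "V' \<le> exp (-M') * c + (1 - exp (-M')) * (S' / M')"
  shows "p0 * g0 + (1 - p0) * V' \<le> exp (-(mu0 + M')) * c + (1 - exp (-(mu0 + M'))) * ((mu0 * g0 + S') / (mu0 + M'))"
proof -
  define e0 where "e0 = exp (-mu0)"
  define E' where "E' = exp (-M')"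
  define R' where "R' = E' * c + (1 - E') * (S' / M')"
  have eT: "exp (-(mu0 + M')) = e0 * E'" by (simp add: e0_def E'_def flip: exp_add)
  have e0p: "0 < e0" "e0 \<le> 1" using mu0 by (auto simp: e0_def)
  have E'p: "0 < E'" "E' \<le> 1" using M' by (auto simp: E'_def)
  have Rg: "R' \<ge> g0"
  proof (cases "M' = 0")
    case True thus ?thesis using gc by (simp add: R'_def E'_def)
  next
    case False
    hence Mp: "M' > 0" using M' by simp
    have avg: "S' / M' \<ge> g0" using S' Mp by (simp add: le_divide_eq mult.commute)
    have "R' - g0 = E' * (c - g0) + (1 - E') * (S' / M' - g0)" by (simp add: R'_def algebra_simps)
    moreover have "E' * (c - g0) \<ge> 0" using E'p gc by simp
    moreover have "(1 - E') * (S' / M' - g0) \<ge> 0" using E'p avg by simp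
    ultimately show ?thesis by linarith
  qed
  have "p0 * g0 + (1 - p0) * V' \<le> p0 * g0 + (1 - p0) * R'"
    using V' p0 unfolding R'_def E'_def by (intro add_left_mono mult_left_mono) auto
  also have "\<dots> = R' - p0 * (R' - g0)" by (simp add: algebra_simps)
  also have "\<dots> \<le> R' - (1 - e0) * (R' - g0)"
    using q0 Rg unfolding e0_def by (intro diff_left_mono mult_right_mono) auto
  also have "\<dots> = (1 - e0) * g0 + e0 * R'" by (simp add: algebra_simps)
  also have "\<dots> \<le> e0 * E' * c + (1 - e0 * E') * ((mu0 * g0 + S') / (mu0 + M'))"
  proof (cases "M' = 0")
    case True
    hence S0': "S' = 0" using S0 by simp
    show ?thesis
    proof (cases "mu0 = 0")
      case True thus ?thesis using \<open>M' = 0\<close> S0' by (simp add: R'_def E'_def e0_def)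
    next
      case False thus ?thesis using \<open>M' = 0\<close> S0' mu0 by (simp add: R'_def E'_def)
    qed
  next
    case False
    hence Mp: "M' > 0" using M' by simp
    define T where "T = mu0 + M'"
    have Tp: "T > 0" using Mp mu0 by (simp add: T_def)
    define avg where "avg = S' / M'"
    have avg: "avg \<ge> g0" using S' Mp by (simp add: avg_def le_divide_eq mult.commute)
    have S'eq: "S' = M' * avg" using Mp by (simp add: avg_def)
    define K where "K = T * (1 - e0) - (1 - e0 * E') * mu0"
    have K0: "K \<ge> 0"
    proof -
      have "mu0 * (1 - exp (-T)) \<le> T * (1 - exp (-mu0))"
        using mu0 Mp by (intro concave_aux) (auto simp: T_def)
      moreover have "exp (-T) = e0 * E'" using eT by (simp add: T_def)
      ultimately show ?thesis by (simp add: K_def e0_def algebra_simps)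
    qed
    have "e0 * E' * c + (1 - e0 * E') * ((mu0 * g0 + S') / (mu0 + M')) - ((1 - e0) * g0 + e0 * R')
        = K * (avg - g0) / T"
      using Tp Mp unfolding R'_def K_def S'eq T_def by (simp add: field_simps)
    moreover have "K * (avg - g0) / T \<ge> 0" using K0 avg Tp by simp
    ultimately show ?thesis by linarith
  qed
  finally show ?thesis using eT by simp
qed



lemma exp_fin_mono:
  fixes f g :: "'b \<Rightarrow> real"
  assumes "finite (set_pmf M)" "\<And>x. x \<in> set_pmf M \<Longrightarrow> f x \<le> g x"
  shows "measure_pmf.expectation M f \<le> measure_pmf.expectation M g"
  using assms by (intro integral_mono_AE integrable_measure_pmf_finite AE_pmfI) auto

lemma finite_set_Pi_pmf_bool:
  assumes "finite A"
  shows "finite (set_pmf (Pi_pmf A False (P :: 'a \<Rightarrow> bool pmf)))"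
proof -
  have "set_pmf (Pi_pmf A False P) \<subseteq> {f. \<forall>x. x \<notin> A \<longrightarrow> f x = False}"
    by (rule set_Pi_pmf_subset[OF assms])
  also have "\<dots> \<subseteq> (\<lambda>S x. x \<in> S) ` Pow A"
  proof
    fix f assume f: "f \<in> {f. \<forall>x. x \<notin> A \<longrightarrow> f x = False}"
    have "f = (\<lambda>x. x \<in> {x\<in>A. f x})" using f by (auto simp: fun_eq_iff)
    thus "f \<in> (\<lambda>S x. x \<in> S) ` Pow A" by blast
  qed
  finally show ?thesis using assms by (rule finite_subset[OF _ finite_imageI[OF finite_Pow_iff[THEN iffD2]]])
qed

lemma key:
  fixes X :: "'a set" and p mu g :: "'a \<Rightarrow> real" and c :: real
  assumes "finite X" "\<And>x. x \<in> X \<Longrightarrow> 0 \<le> p x" "\<And>x. x \<in> X \<Longrightarrow> p x \<le> 1"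
    "\<And>x. x \<in> X \<Longrightarrow> 0 \<le> mu x" "\<And>x. x \<in> X \<Longrightarrow> 1 - exp (-mu x) \<le> p x" "\<And>x. x \<in> X \<Longrightarrow> g x \<le> c"
  shows "measure_pmf.expectation (Pi_pmf X False (\<lambda>x. bernoulli_pmf (p x))) (\<lambda>b. Min (insert c (g ` {x\<in>X. b x})))
    \<le> exp (-(\<Sum>x\<in>X. mu x)) * c + (1 - exp (-(\<Sum>x\<in>X. mu x))) * ((\<Sum>x\<in>X. mu x * g x) / (\<Sum>x\<in>X. mu x))"
  using assms
proof (induction "card X" arbitrary: X rule: less_induct)
  case less
  note fin = less.prems(1)
  show ?case
  proof (cases "X = {}")
    case True
    thus ?thesis by simp
  next
    case False
    have "Min (g ` X) \<in> g ` X" using False fin by (intro Min_in) auto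
    then obtain x0 where x0X: "x0 \<in> X" and x0m: "g x0 = Min (g ` X)" by auto
    have x0min: "\<And>x. x \<in> X \<Longrightarrow> g x0 \<le> g x" using x0m fin by simp
    define A where "A = X - {x0}"
    have XA: "X = insert x0 A" and x0A: "x0 \<notin> A" and finA: "finite A" using x0X fin by (auto simp: A_def)
    have cardA: "card A < card X" unfolding A_def by (rule card_Diff1_less[OF fin x0X])
    let ?P = "\<lambda>x. bernoulli_pmf (p x)"
    let ?h = "\<lambda>b. Min (insert c (g ` {x\<in>X. b x}))"
    let ?hA = "\<lambda>b. Min (insert c (g ` {x\<in>A. b x}))"
    define V' where "V' = measure_pmf.expectation (Pi_pmf A False ?P) ?hA"
    have IH: "V' \<le> exp (-(\<Sum>x\<in>A. mu x)) * c + (1 - exp (-(\<Sum>x\<in>A. mu x))) * ((\<Sum>x\<in>A. mu x * g x) / (\<Sum>x\<in>A. mu x))"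
      unfolding V'_def using less.prems cardA finA by (intro less.hyps) (auto simp: A_def)
    have p0: "0 \<le> p x0" "p x0 \<le> 1" using less.prems x0X by auto
    have finPA: "finite (set_pmf (Pi_pmf A False ?P))" by (rule finite_set_Pi_pmf_bool[OF finA])
    have E: "measure_pmf.expectation (Pi_pmf X False ?P) ?h = p x0 * g x0 + (1 - p x0) * V'"
    proof -
      have "Pi_pmf X False ?P = do {y \<leftarrow> ?P x0; f \<leftarrow> Pi_pmf A False ?P; return_pmf (f(x0 := y))}"
        unfolding XA by (rule Pi_pmf_insert'[OF finA x0A])
      also have "\<dots> = ?P x0 \<bind> (\<lambda>y. map_pmf (\<lambda>f. f(x0 := y)) (Pi_pmf A False ?P))"
        by (simp add: map_pmf_def)
      finally have eq: "Pi_pmf X False ?P = ?P x0 \<bind> (\<lambda>y. map_pmf (\<lambda>f. f(x0 := y)) (Pi_pmf A False ?P))" .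
      have "measure_pmf.expectation (Pi_pmf X False ?P) ?h
          = (\<Sum>y\<in>UNIV. pmf (?P x0) y *\<^sub>R measure_pmf.expectation (map_pmf (\<lambda>f. f(x0 := y)) (Pi_pmf A False ?P)) ?h)"
        unfolding eq by (rule pmf_expectation_bind) (auto simp: finPA)
      also have "\<dots> = p x0 * measure_pmf.expectation (Pi_pmf A False ?P) (\<lambda>f. ?h (f(x0 := True)))
                    + (1 - p x0) * measure_pmf.expectation (Pi_pmf A False ?P) (\<lambda>f. ?h (f(x0 := False)))"
        using p0 by (simp add: UNIV_bool)
      also have "measure_pmf.expectation (Pi_pmf A False ?P) (\<lambda>f. ?h (f(x0 := True))) = g x0"
      proof -
        have "?h (f(x0 := True)) = g x0" for f
        proof -
          have st: "{x\<in>X. (f(x0 := True)) x} = insert x0 {x\<in>A. f x}" using XA x0A by auto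
          have fS: "finite (insert c (g ` insert x0 {x\<in>A. f x}))" using finA by auto
          have "Min (insert c (g ` insert x0 {x\<in>A. f x})) \<le> g x0" using fS by (intro Min_le) auto
          moreover have "g x0 \<le> Min (insert c (g ` insert x0 {x\<in>A. f x}))"
            using fS less.prems(6)[OF x0X] x0min XA by (subst Min_ge_iff) auto
          ultimately show ?thesis unfolding st by linarith
        qed
        thus ?thesis by simp
      qed
      also have "measure_pmf.expectation (Pi_pmf A False ?P) (\<lambda>f. ?h (f(x0 := False))) = V'"
      proof -
        have "{x\<in>X. (f(x0 := False)) x} = {x\<in>A. f x}" for f using XA x0A by auto
        thus ?thesis unfolding V'_def by simp
      qed
      finally show ?thesis .
    qed
    define M' where "M' = (\<Sum>x\<in>A. mu x)"
    define S' where "S' = (\<Sum>x\<in>A. mu x * g x)"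
    have M'0: "M' \<ge> 0" unfolding M'_def using less.prems XA by (intro sum_nonneg) auto
    have S'g: "S' \<ge> M' * g x0" unfolding S'_def M'_def sum_distrib_right
      using less.prems XA x0min by (intro sum_mono mult_left_mono) auto
    have S'0: "S' = 0" if "M' = 0"
    proof -
      have "\<forall>x\<in>A. mu x = 0" using that finA less.prems XA unfolding M'_def
        by (subst (asm) sum_nonneg_eq_0_iff) auto
      thus ?thesis unfolding S'_def by simp
    qed
    have "p x0 * g x0 + (1 - p x0) * V' \<le> exp (-(mu x0 + M')) * c + (1 - exp (-(mu x0 + M'))) * ((mu x0 * g x0 + S') / (mu x0 + M'))"
      using p0 less.prems x0X M'0 S'g S'0 IH unfolding M'_def[symmetric] S'_def[symmetric]
      by (intro arith_step) auto
    moreover have "(\<Sum>x\<in>X. mu x) = mu x0 + M'" "(\<Sum>x\<in>X. mu x * g x) = mu x0 * g x0 + S'"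
      unfolding M'_def S'_def XA using finA x0A by simp_all
    ultimately show ?thesis using E by simp
  qed
qed



lemma samp_rate_nonneg:
  assumes "finite X" "finite C" "C \<noteq> {}" "l \<ge> 0"
  shows "samp_rate X l C x \<ge> 0"
proof -
  have "setcost X C \<ge> 0" unfolding setcost_def using pcost_nonneg[OF assms(2,3)] by (intro sum_nonneg) auto
  thus ?thesis unfolding samp_rate_def using pcost_nonneg[OF assms(2,3)] assms(4) by simp
qed

lemma one_minus_exp_le: "s \<ge> 0 \<Longrightarrow> 1 - exp (-s) \<le> min 1 (s::real)"
  using exp_ge_add_one_self[of "-s"] by auto

lemma cluster_bound:
  fixes X C P :: "'a::euclidean_space set"
  assumes X: "finite X" and C: "finite C" "C \<noteq> {}" and PX: "P \<subseteq> X" and l: "l > 0"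
  shows "measure_pmf.expectation (Pi_pmf X False (\<lambda>x. bernoulli_pmf (min 1 (samp_rate X l C x))))
           (\<lambda>b. \<Sum>x\<in>P. pcost x (C \<union> {x\<in>X. b x}))
       \<le> exp (-(l * (\<Sum>x\<in>P. pcost x C) / setcost X C)) * (\<Sum>x\<in>P. pcost x C)
          + 5 * (\<Sum>y\<in>P. (norm (y - cen P))^2)"
proof -
  define phi where "phi = setcost X C"
  define cP where "cP = (\<Sum>x\<in>P. pcost x C)"
  define AP where "AP = (\<Sum>y\<in>P. (norm (y - cen P))^2)"
  define f where "f y = (\<Sum>x\<in>P. min (pcost x C) ((norm (x - y))^2))" for y
  define mu where "mu x = (if x \<in> P then samp_rate X l C x else 0)" for x
  define g where "g x = (if x \<in> P then f x else cP)" for x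
  let ?p = "\<lambda>x. min 1 (samp_rate X l C x)"
  have finP: "finite P" using X PX finite_subset by blast
  have pc0: "\<And>x. pcost x C \<ge> 0" using pcost_nonneg[OF C] .
  have sr0: "\<And>x. samp_rate X l C x \<ge> 0" using samp_rate_nonneg[OF X C] l by simp
  have phi0: "phi \<ge> 0" unfolding phi_def setcost_def using pc0 by (intro sum_nonneg) auto
  have AP0: "AP \<ge> 0" unfolding AP_def by (intro sum_nonneg) auto
  have fle: "f y \<le> cP" for y unfolding f_def cP_def by (intro sum_mono) auto
  have pw: "(\<Sum>x\<in>P. pcost x (C \<union> {x\<in>X. b x})) \<le> Min (insert cP (g ` {x\<in>X. b x}))" for b
  proof -
    let ?S = "{x\<in>X. b x}"
    have finCS: "finite (C \<union> ?S)" using C X by auto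
    have "(\<Sum>x\<in>P. pcost x (C \<union> ?S)) \<le> cP" unfolding cP_def
      using finCS C by (intro sum_mono pcost_mono) auto
    moreover have "(\<Sum>x\<in>P. pcost x (C \<union> ?S)) \<le> g y" if y: "y \<in> ?S" for y
    proof (cases "y \<in> P")
      case True
      have "(\<Sum>x\<in>P. pcost x (C \<union> ?S)) \<le> f y" unfolding f_def
      proof (intro sum_mono)
        fix x assume "x \<in> P"
        have "pcost x (C \<union> ?S) \<le> pcost x C" using finCS C by (intro pcost_mono) auto
        moreover have "pcost x (C \<union> ?S) \<le> (norm (x - y))^2" using finCS y by (intro pcost_le) auto
        ultimately show "pcost x (C \<union> ?S) \<le> min (pcost x C) ((norm (x - y))^2)" by simp
      qed
      thus ?thesis using True by (simp add: g_def)
    next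
      case False
      thus ?thesis using \<open>(\<Sum>x\<in>P. pcost x (C \<union> ?S)) \<le> cP\<close> by (simp add: g_def)
    qed
    ultimately show ?thesis using X by (subst Min_ge_iff) auto
  qed
  have "measure_pmf.expectation (Pi_pmf X False (\<lambda>x. bernoulli_pmf (?p x))) (\<lambda>b. \<Sum>x\<in>P. pcost x (C \<union> {x\<in>X. b x}))
      \<le> measure_pmf.expectation (Pi_pmf X False (\<lambda>x. bernoulli_pmf (?p x))) (\<lambda>b. Min (insert cP (g ` {x\<in>X. b x})))"
    by (intro exp_fin_mono finite_set_Pi_pmf_bool[OF X] pw)
  also have "\<dots> \<le> exp (-(\<Sum>x\<in>X. mu x)) * cP + (1 - exp (-(\<Sum>x\<in>X. mu x))) * ((\<Sum>x\<in>X. mu x * g x) / (\<Sum>x\<in>X. mu x))"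
  proof (rule key[OF X])
    fix x assume "x \<in> X"
    show "0 \<le> ?p x" using sr0 by simp
    show "?p x \<le> 1" by simp
    show "0 \<le> mu x" using sr0 by (simp add: mu_def)
    show "1 - exp (-mu x) \<le> ?p x"
      using one_minus_exp_le[OF sr0[of x]] sr0[of x] by (auto simp: mu_def)
    show "g x \<le> cP" using fle by (simp add: g_def)
  qed
  also have "(\<Sum>x\<in>X. mu x) = l * cP / phi"
  proof -
    have "(\<Sum>x\<in>X. mu x) = (\<Sum>x\<in>P. samp_rate X l C x)"
      unfolding mu_def using X PX by (simp add: sum.If_cases Int_absorb1)
    also have "\<dots> = l * cP / phi" unfolding samp_rate_def cP_def phi_def
      by (simp add: sum_divide_distrib sum_distrib_left)
    finally show ?thesis .
  qed
  also have "(\<Sum>x\<in>X. mu x * g x) = (l / phi) * (\<Sum>x\<in>P. pcost x C * f x)"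
  proof -
    have "(\<Sum>x\<in>X. mu x * g x) = (\<Sum>x\<in>X. if x \<in> P then samp_rate X l C x * f x else 0)"
      by (intro sum.cong) (auto simp: mu_def g_def)
    also have "\<dots> = (\<Sum>x\<in>P. samp_rate X l C x * f x)"
      using X PX by (simp add: sum.If_cases Int_absorb1 Int_absorb2)
    also have "\<dots> = (l / phi) * (\<Sum>x\<in>P. pcost x C * f x)" unfolding samp_rate_def phi_def
      by (simp add: sum_distrib_left mult.assoc)
    finally show ?thesis .
  qed
  also have "(1 - exp (-(l * cP / phi))) * ((l / phi) * (\<Sum>x\<in>P. pcost x C * f x) / (l * cP / phi)) \<le> 5 * AP"
  proof (cases "l * cP / phi = 0")
    case True show ?thesis unfolding True using AP0 by simp
  next
    case False
    hence pos: "phi > 0" "cP > 0" using phi0 l cP_def pc0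
      by (auto simp: sum_nonneg) (metis less_eq_real_def sum_nonneg)+
    hence Pne: "P \<noteq> {}" unfolding cP_def by auto
    have "(l / phi) * (\<Sum>x\<in>P. pcost x C * f x) / (l * cP / phi) = (\<Sum>x\<in>P. pcost x C * f x) / cP"
      using pos l by (simp add: field_simps)
    also have "\<dots> \<le> 5 * AP"
    proof -
      have fx: "f x = (\<Sum>y\<in>P. min (pcost y C) ((norm (x - y))^2))" for x
        unfolding f_def by (intro sum.cong refl) (simp add: norm_minus_commute)
      show ?thesis using L5[OF finP Pne C] pos unfolding fx AP_def cP_def by (simp add: divide_le_eq mult.commute mult.left_commute)
    qed
    finally have r: "(l / phi) * (\<Sum>x\<in>P. pcost x C * f x) / (l * cP / phi) \<le> 5 * AP" .
    have e: "0 \<le> 1 - exp (-(l * cP / phi))" "1 - exp (-(l * cP / phi)) \<le> 1"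
      using pos l by auto
    show ?thesis
    proof (cases "(l / phi) * (\<Sum>x\<in>P. pcost x C * f x) / (l * cP / phi) \<ge> 0")
      case True
      hence "(1 - exp (-(l * cP / phi))) * ((l / phi) * (\<Sum>x\<in>P. pcost x C * f x) / (l * cP / phi))
          \<le> 1 * ((l / phi) * (\<Sum>x\<in>P. pcost x C * f x) / (l * cP / phi))" using e by (intro mult_right_mono) auto
      thus ?thesis using r by simp
    next
      case False
      hence "(1 - exp (-(l * cP / phi))) * ((l / phi) * (\<Sum>x\<in>P. pcost x C * f x) / (l * cP / phi)) \<le> 0"
        using e by (intro mult_nonneg_nonpos) auto
      thus ?thesis using AP0 by linarith
    qed
  qed
  hence "exp (-(l * cP / phi)) * cP + (1 - exp (-(l * cP / phi))) * ((l / phi) * (\<Sum>x\<in>P. pcost x C * f x) / (l * cP / phi))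
      \<le> exp (-(l * cP / phi)) * cP + 5 * AP" by linarith
  finally show ?thesis unfolding cP_def phi_def AP_def .
qed



definition Fac :: "real \<Rightarrow> nat \<Rightarrow> real" where
  "Fac l k = (if l < real k then exp (- l / real k) else real k / (exp 1 * l))"

lemma finite_set_step: "finite X \<Longrightarrow> finite (set_pmf (kmpar_step X l C))"
  unfolding kmpar_step_def by (simp add: finite_set_Pi_pmf_bool)

lemma step_bound:
  fixes X C Cs :: "'a::euclidean_space set"
  assumes X: "finite X" and C: "finite C" "C \<noteq> {}" and Cs: "finite Cs" "card Cs = k" "k \<ge> 1" and l: "l > 0"
  shows "measure_pmf.expectation (kmpar_step X l C) (\<lambda>C'. setcost X C') \<le> Fac l k * setcost X C + 5 * setcost X Cs"
proof -
  have Csne: "Cs \<noteq> {}" using Cs by auto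
  define asg where "asg x = (SOME c. c \<in> Cs \<and> pcost x Cs = (norm (x - c))^2)" for x
  have asg: "asg x \<in> Cs \<and> pcost x Cs = (norm (x - asg x))^2" for x
  proof -
    obtain c where "c \<in> Cs" "pcost x Cs = (norm (x - c))^2" using pcost_attained[OF Cs(1) Csne] by blast
    hence "\<exists>c. c \<in> Cs \<and> pcost x Cs = (norm (x - c))^2" by blast
    thus ?thesis unfolding asg_def by (rule someI_ex)
  qed
  define cell where "cell c = {x\<in>X. asg x = c}" for c
  have cellX: "cell c \<subseteq> X" for c unfolding cell_def by auto
  have grp: "(\<Sum>x\<in>X. h x) = (\<Sum>c\<in>Cs. \<Sum>x\<in>cell c. h x)" for h :: "'a \<Rightarrow> real"
  proof -
    have "asg ` X \<subseteq> Cs" using asg by auto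
    from sum.group[OF X Cs(1) this, of h] show ?thesis unfolding cell_def by simp
  qed
  define phi where "phi = setcost X C"
  define cP where "cP c = (\<Sum>x\<in>cell c. pcost x C)" for c
  define AP where "AP c = (\<Sum>y\<in>cell c. (norm (y - cen (cell c)))^2)" for c
  let ?Pi = "Pi_pmf X False (\<lambda>x. bernoulli_pmf (min 1 (samp_rate X l C x)))"
  have finPi: "finite (set_pmf ?Pi)" by (rule finite_set_Pi_pmf_bool[OF X])
  have "measure_pmf.expectation (kmpar_step X l C) (\<lambda>C'. setcost X C')
      = measure_pmf.expectation ?Pi (\<lambda>b. setcost X (C \<union> {x\<in>X. b x}))"
    unfolding kmpar_step_def by simp
  also have "\<dots> = measure_pmf.expectation ?Pi (\<lambda>b. \<Sum>c\<in>Cs. \<Sum>x\<in>cell c. pcost x (C \<union> {x\<in>X. b x}))"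
    unfolding setcost_def by (subst grp) rule
  also have "\<dots> = (\<Sum>c\<in>Cs. measure_pmf.expectation ?Pi (\<lambda>b. \<Sum>x\<in>cell c. pcost x (C \<union> {x\<in>X. b x})))"
    by (subst Bochner_Integration.integral_sum) (auto intro!: integrable_measure_pmf_finite finPi)
  also have "\<dots> \<le> (\<Sum>c\<in>Cs. exp (-(l * cP c / phi)) * cP c + 5 * AP c)"
    unfolding cP_def phi_def AP_def by (intro sum_mono cluster_bound[OF X C cellX l])
  also have "\<dots> = (\<Sum>c\<in>Cs. cP c * exp (-(l * cP c / phi))) + 5 * (\<Sum>c\<in>Cs. AP c)"
    by (simp add: sum.distrib sum_distrib_left sum_distrib_right mult.commute)
  also have "(\<Sum>c\<in>Cs. AP c) \<le> setcost X Cs"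
  proof -
    have "(\<Sum>c\<in>Cs. AP c) \<le> (\<Sum>c\<in>Cs. \<Sum>y\<in>cell c. (norm (y - c))^2)"
      unfolding AP_def using X cellX by (intro sum_mono centroid_min) (auto intro: finite_subset)
    also have "\<dots> = (\<Sum>c\<in>Cs. \<Sum>y\<in>cell c. (norm (y - asg y))^2)"
      by (intro sum.cong refl) (auto simp: cell_def)
    also have "\<dots> = setcost X Cs" unfolding setcost_def using asg by (subst grp) simp
    finally show ?thesis .
  qed
  also have "(\<Sum>c\<in>Cs. cP c * exp (-(l * cP c / phi))) \<le> Fac l k * phi"
  proof -
    have pc0: "\<And>x. pcost x C \<ge> 0" using pcost_nonneg[OF C] .
    have cP0: "cP c \<ge> 0" for c unfolding cP_def using pc0 by (intro sum_nonneg) auto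
    have sumcP: "(\<Sum>c\<in>Cs. cP c) = phi" unfolding cP_def phi_def setcost_def by (rule grp[symmetric])
    show ?thesis
    proof (cases "phi > 0")
      case True
      show ?thesis using factor_bound[OF Cs(1,2,3) cP0 sumcP True l] unfolding Fac_def
        by (cases "l < real k") (simp_all only: if_True if_False)
    next
      case False
      hence "phi = 0" using sumcP cP0 by (metis not_less sum_nonneg order.antisym)
      hence "sum cP Cs = 0" using sumcP by simp
      hence "\<forall>c\<in>Cs. cP c = 0" using cP0 Cs(1) sum_nonneg_eq_0_iff[of Cs cP] by auto
      thus ?thesis using \<open>phi = 0\<close> by simp
    qed
  qed
  finally show ?thesis unfolding phi_def by simp
qed



lemma seq_support:
  assumes X: "finite X" "X \<noteq> {}"
  shows "C \<in> set_pmf (kmpar_seq X l n) \<Longrightarrow> finite C \<and> C \<noteq> {} \<and> C \<subseteq> X"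
proof (induction n arbitrary: C)
  case 0
  thus ?case using X by auto
next
  case (Suc n)
  then obtain C0 b where C0: "C0 \<in> set_pmf (kmpar_seq X l n)" and C: "C = C0 \<union> {x\<in>X. b x}"
    by (auto simp: kmpar_step_def)
  from Suc.IH[OF C0] show ?case using C X by auto
qed

lemma seq_support_pow: "finite X \<Longrightarrow> X \<noteq> {} \<Longrightarrow> set_pmf (kmpar_seq X l n) \<subseteq> Pow X"
  using seq_support by blast

lemma exp_bind_fin:
  fixes f :: "'b \<Rightarrow> real"
  assumes "finite A" "set_pmf M \<subseteq> A" "\<And>x. x \<in> A \<Longrightarrow> finite (set_pmf (N x))"
  shows "measure_pmf.expectation (M \<bind> N) f = measure_pmf.expectation M (\<lambda>x. measure_pmf.expectation (N x) f)"
proof -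
  have "measure_pmf.expectation (M \<bind> N) f = (\<Sum>a\<in>A. pmf M a *\<^sub>R measure_pmf.expectation (N a) f)"
    by (rule pmf_expectation_bind[OF assms(1) assms(3) assms(2)])
  also have "\<dots> = measure_pmf.expectation M (\<lambda>x. measure_pmf.expectation (N x) f)"
    using assms by (subst integral_measure_pmf[OF assms(1)]) auto
  finally show ?thesis .
qed

lemma inf_univ: "infinite (UNIV :: 'a::euclidean_space set)"
proof
  assume fin: "finite (UNIV::'a set)"
  obtain b :: 'a where b: "b \<in> Basis" using nonempty_Basis by blast
  have b0: "b \<noteq> 0" using b by auto
  have inj: "inj (\<lambda>r::real. r *\<^sub>R b)" by (rule injI) (use b0 in simp)
  have "finite (range (\<lambda>r::real. r *\<^sub>R b))" using fin by (rule finite_subset[rotated]) auto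
  hence "finite (UNIV::real set)" using finite_imageD inj by blast
  thus False using infinite_UNIV_char_0 by blast
qed

theorem mainTheorem11:
  fixes X :: "'a::euclidean_space set" and k :: nat and l :: real and t :: nat
  assumes "finite X" and "X \<noteq> {}" and "k \<ge> 1" and "l > 0" and "t \<ge> 1"
  shows "(l < real k \<longrightarrow>
           exp_cost X l (t + 1) \<le> exp (- l / real k) * exp_cost X l t + 5 * OPT k X)
       \<and> (l \<ge> real k \<longrightarrow>
           exp_cost X l (t + 1) \<le> real k / (exp 1 * l) * exp_cost X l t + 5 * OPT k X)"
proof -
  let ?M = "kmpar_seq X l (t - 1)"
  have finM: "finite (set_pmf ?M)" using seq_support_pow[OF assms(1,2)] assms(1)
    by (meson finite_Pow_iff finite_subset)
  have bound: "exp_cost X l (t + 1) \<le> Fac l k * exp_cost X l t + 5 * setcost X Cs"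
    if Cs: "finite Cs" "card Cs = k" for Cs :: "'a set"
  proof -
    have "exp_cost X l (t + 1) = measure_pmf.expectation (?M \<bind> kmpar_step X l) (\<lambda>C. setcost X C)"
    proof -
      have "t = Suc (t - 1)" using assms(5) by simp
      hence "kmpar_seq X l t = ?M \<bind> kmpar_step X l" by (metis kmpar_seq.simps(2))
      thus ?thesis by (simp add: exp_cost_def kmpar_C_def)
    qed
    also have "\<dots> = measure_pmf.expectation ?M (\<lambda>C. measure_pmf.expectation (kmpar_step X l C) (\<lambda>C. setcost X C))"
      by (rule exp_bind_fin[OF _ seq_support_pow[OF assms(1,2)]]) (auto simp: assms(1) finite_set_step)
    also have "\<dots> \<le> measure_pmf.expectation ?M (\<lambda>C. Fac l k * setcost X C + 5 * setcost X Cs)"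
    proof (rule exp_fin_mono[OF finM])
      fix C assume "C \<in> set_pmf ?M"
      hence "finite C" "C \<noteq> {}" using seq_support[OF assms(1,2)] by blast+
      thus "measure_pmf.expectation (kmpar_step X l C) (\<lambda>C. setcost X C) \<le> Fac l k * setcost X C + 5 * setcost X Cs"
        using step_bound[OF assms(1) _ _ Cs assms(3,4)] by blast
    qed
    also have "\<dots> = Fac l k * measure_pmf.expectation ?M (\<lambda>C. setcost X C) + 5 * setcost X Cs"
    proof -
      have i: "\<And>f::'a set \<Rightarrow> real. integrable ?M f" using integrable_measure_pmf_finite[OF finM] .
      have "measure_pmf.expectation ?M (\<lambda>C. Fac l k * setcost X C + 5 * setcost X Cs)
          = measure_pmf.expectation ?M (\<lambda>C. Fac l k * setcost X C) + measure_pmf.expectation ?M (\<lambda>C. 5 * setcost X Cs)"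
        by (rule Bochner_Integration.integral_add) (rule i)+
      also have "measure_pmf.expectation ?M (\<lambda>C. Fac l k * setcost X C) = Fac l k * measure_pmf.expectation ?M (\<lambda>C. setcost X C)"
        by (rule integral_mult_right_zero)
      also have "measure_pmf.expectation ?M (\<lambda>C. 5 * setcost X Cs) = 5 * setcost X Cs" by simp
      finally show ?thesis .
    qed
    also have "measure_pmf.expectation ?M (\<lambda>C. setcost X C) = exp_cost X l t"
      by (simp add: exp_cost_def kmpar_C_def)
    finally show ?thesis .
  qed
  define S where "S = {setcost X C | C. finite C \<and> card C = k}"
  have Sne: "S \<noteq> {}"
  proof -
    obtain B :: "'a set" where "finite B" "card B = k" using infinite_arbitrarily_large[OF inf_univ] by blast
    thus ?thesis unfolding S_def by blast
  qed
  have "(exp_cost X l (t + 1) - Fac l k * exp_cost X l t) / 5 \<le> Inf S"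
  proof (rule cInf_greatest[OF Sne])
    fix s assume "s \<in> S"
    then obtain Cs where "s = setcost X Cs" "finite Cs" "card Cs = k" unfolding S_def by blast
    thus "(exp_cost X l (t + 1) - Fac l k * exp_cost X l t) / 5 \<le> s" using bound by fastforce
  qed
  hence main: "exp_cost X l (t + 1) \<le> Fac l k * exp_cost X l t + 5 * OPT k X"
    unfolding OPT_def S_def by simp
  show ?thesis using main unfolding Fac_def by auto
qed


end
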